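(* For every integer $m\ge0$ and $n\ge0$, $$\mathfrak D^{(m)}_{-1}(q;t_1,\dots,t_n)=[z^m]X-[z^{m+2}]X,\qquad X=\sum_{\vec\epsilon\in\{\pm1\}^n}\epsilon_1\cdots\epsilon_n\,\mathrm{tr}_{\mathcal F^{-1}}\big(z^{e_{11}}q^{L_0}\mathsf A(t_1^{\epsilon_1})\cdots\mathsf A(t_n^{\epsilon_n})\big),$$ where $[z^j]X$ is the coefficient of $z^j$ in $X$.
   Context: Let $\mathcal F^{-1}$ be the bosonic Fock space with basis $v=\gamma^+_{-r_1}\cdots\gamma^+_{-r_a}\gamma^-_{-s_1}\cdots\gamma^-_{-s_b}|0\rangle$ ($r_1\ge\cdots\ge r_a>0$, $s_1\ge\cdots\ge s_b>0$ in $\frac12+\mathbb Z$), $L_0v=(\sum r_i+\sum s_j)v$, $e_{11}v=(a-b)v$, and $\mathsf A(t)v=\big(\sum_it^{r_i}-\sum_jt^{-s_j}+\frac{1}{t^{-1/2}-t^{1/2}}\big)v$. The type $D$ Lie algebra $d_\infty$ acts on $\mathcal F^{-1}$ at level $-1$, with the operator $\mathsf D(t)$ acting as $\mathsf A(t)-\mathsf A(t^{-1})$; by a result of Wang there is a commuting $Sp(2)$-action (its torus element $\mathrm{diag}(z,z^{-1})$ acting as $z^{e_{11}}$), commuting with $L_0$, with $\mathcal F^{-1}\cong\bigoplus_{m\ge0}V_m(Sp(2))\otimes L_m$, $V_m$ the irreducible $(m+1)$-dimensional module and $L_m=\mathrm{Hom}_{Sp(2)}(V_m,\mathcal F^{-1})$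 the irreducible $d_\infty$-module $L(d_\infty;\Lambda(m),-1)$. Define $\mathfrak D^{(m)}_{-1}(q;t_1,\dots,t_n):=\mathrm{tr}_{L_m}\big(q^{L_0}\mathsf D(t_1)\cdots\mathsf D(t_n)\big)$. *)

theory Defs
  imports Complex_Main "HOL-Library.Multiset" "HOL-Library.Function_Algebras"
begin

text \<open>A label (M, P) encodes the
monomial vector  prod_{k in# M} gamma^+_{-(k+1/2)}  prod_{k in# P} gamma^-_{-(k+1/2)} |0>,
i.e. the multiset M (resp. P) records the modes r = k + 1/2 (resp. s = k + 1/2).\<close>

type_synonym label = "nat multiset \<times> nat multiset"

text \<open>Twice the L_0-eigenvalue (L_0 takes values in (1/2) N).\<close>
definition deg2 :: "label \<Rightarrow> nat" where
  "deg2 x = (\<Sum>k\<in>#fst x. 2*k+1) + (\<Sum>k\<in>#snd x. 2*k+1)"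

definition e11 :: "label \<Rightarrow> int" where
  "e11 x = int (size (fst x)) - int (size (snd x))"

text \<open>Eigenvalue of A(t) on a basis vector, with w = t^{1/2} (so t^r = w^{2r}).\<close>
definition Aval :: "complex \<Rightarrow> label \<Rightarrow> complex" where
  "Aval w x = (\<Sum>k\<in>#fst x. w ^ (2*k+1)) - (\<Sum>k\<in>#snd x. (inverse w) ^ (2*k+1))
              + 1 / (inverse w - w)"

text \<open>Eigenvalue of D(t) = A(t) - A(t^{-1}); the square root of t^{-1} is inverse w.\<close>
definition Dval :: "complex \<Rightarrow> label \<Rightarrow> complex" where
  "Dval w x = Aval w x - Aval (inverse w) x"

text \<open>Vectors of F^{-1} are coefficient functions on labels (finitely supported).
The raising operator of sp(2): e = sum_{r>0} gamma^+_{-r} gamma^+_r, where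
[gamma^+_r, gamma^-_{-r}] = 1 for r > 0.\<close>
definition raise_op :: "(label \<Rightarrow> complex) \<Rightarrow> (label \<Rightarrow> complex)" where
  "raise_op v y = (\<Sum>k\<in>set_mset (fst y).
      of_nat (count (snd y) k + 1) * v (fst y - {#k#}, add_mset k (snd y)))"

text \<open>Degree-(N2/2) part of L_m = Hom_{Sp(2)}(V_m, F^{-1}), realised as the space of
sp(2)-highest weight vectors of weight m.\<close>
definition Lspace :: "nat \<Rightarrow> nat \<Rightarrow> (label \<Rightarrow> complex) set" where
  "Lspace m N2 = {v. (\<forall>x. v x \<noteq> 0 \<longrightarrow> deg2 x = N2 \<and> e11 x = int m) \<and> raise_op v = 0}"

definition fscale :: "complex \<Rightarrow> ('a \<Rightarrow> complex) \<Rightarrow> ('a \<Rightarrow> complex)" where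
  "fscale c f = (\<lambda>x. c * f x)"

definition trace_on :: "('a \<Rightarrow> complex) set \<Rightarrow> (('a \<Rightarrow> complex) \<Rightarrow> ('a \<Rightarrow> complex)) \<Rightarrow> complex" where
  "trace_on U T = (let B = (SOME B. B \<subseteq> U \<and> \<not> module.dependent fscale B \<and> module.span fscale B = U)
     in \<Sum>b\<in>B. module.representation fscale B (T b) b)"

text \<open>The q-series D^{(m)}_{-1}(q; t_1..t_n) = tr_{L_m}(q^{L_0} D(t_1)...D(t_n)),
as the function N2 |-> coefficient of q^{N2/2}; ws = [t_1^{1/2}, ..., t_n^{1/2}].\<close>
definition frakD :: "nat \<Rightarrow> complex list \<Rightarrow> nat \<Rightarrow> complex" where
  "frakD m ws N2 = trace_on (Lspace m N2) (\<lambda>v x. (\<Prod>w\<leftarrow>ws. Dval w x) * v x)"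

definition signs :: "nat \<Rightarrow> int list set" where
  "signs n = {es. length es = n \<and> set es \<subseteq> {-1, 1}}"

text \<open>X = sum_eps eps_1..eps_n tr_F(z^{e11} q^{L0} A(t_1^{eps_1})...A(t_n^{eps_n})),
as the function (j, N2) |-> coefficient of z^j q^{N2/2}.  The trace of the diagonal
operator is the sum of its eigenvalues over the monomial basis.\<close>
definition Xcoeff :: "complex list \<Rightarrow> int \<Rightarrow> nat \<Rightarrow> complex" where
  "Xcoeff ws j N2 = (\<Sum>es\<in>signs (length ws). of_int (prod_list es) *
      (\<Sum>x\<in>{x. deg2 x = N2 \<and> e11 x = j}. \<Prod>i<length ws. Aval ((ws!i) powi (es!i)) x))"

end

theory Submission
  imports Defs
begin


interpretation V: vector_space "fscale :: complex \<Rightarrow> ('a \<Rightarrow> complex) \<Rightarrow> ('a \<Rightarrow> complex)"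
  by unfold_locales (auto simp: fscale_def fun_eq_iff algebra_simps)

lemma fscale_apply[simp]: "fscale c f x = c * f x" by (simp add: fscale_def)

definition Xs :: "nat \<Rightarrow> int \<Rightarrow> label set" where
  "Xs N j = {x. deg2 x = N \<and> e11 x = j}"

definition Fs :: "'a set \<Rightarrow> ('a \<Rightarrow> complex) set" where
  "Fs Z = {v. \<forall>x. v x \<noteq> 0 \<longrightarrow> x \<in> Z}"

definition dl :: "'a \<Rightarrow> 'a \<Rightarrow> complex" where
  "dl x = (\<lambda>z. if z = x then 1 else 0)"

lemma size_le_sum: "size M \<le> (\<Sum>k\<in>#M. 2*k+1::nat)"
  by (induction M) auto

lemma elem_le_sum: "k \<in># M \<Longrightarrow> k \<le> (\<Sum>k\<in>#M. 2*k+1::nat)"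
  by (induction M) auto

lemma finite_deg: "finite {x. deg2 x = N}"
proof -
  let ?A = "\<Union>n\<le>N. multisets_of_size {..N} n"
  have "finite ?A" by auto
  moreover have "{x. deg2 x = N} \<subseteq> ?A \<times> ?A"
  proof
    fix x assume "x \<in> {x. deg2 x = N}"
    then have d: "deg2 x = N" by simp
    obtain M P where x: "x = (M,P)" by (cases x)
    have "(\<Sum>k\<in>#M. 2*k+1::nat) \<le> N" "(\<Sum>k\<in>#P. 2*k+1::nat) \<le> N"
      using d x by (auto simp: deg2_def)
    then have "M \<in> ?A" "P \<in> ?A"
      using size_le_sum[of M] size_le_sum[of P] elem_le_sum[of _ M] elem_le_sum[of _ P]
      by (force simp: multisets_of_size_def)+
    then show "x \<in> ?A \<times> ?A" using x by auto
  qed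
  ultimately show ?thesis using finite_subset by blast
qed

lemma finite_Xs: "finite (Xs N j)"
  by (rule finite_subset[OF _ finite_deg[of N]]) (auto simp: Xs_def)



lemma T_sum:
  fixes T :: "'a::ab_group_add \<Rightarrow> 'b::ab_group_add"
  assumes "\<And>u v. T (u+v) = T u + T v"
  shows "T (\<Sum>i\<in>I. g i) = (\<Sum>i\<in>I. T (g i))"
proof -
  have z: "T 0 = 0" using assms[of 0 0] by simp
  show ?thesis by (induction I rule: infinite_finite_induct) (auto simp: z assms)
qed

lemma trace_basis_indep:
  fixes T :: "('a \<Rightarrow> complex) \<Rightarrow> ('a \<Rightarrow> complex)"
  assumes iB: "V.independent B" and iC: "V.independent C" and fB: "finite B" and fC: "finite C"
    and sp: "V.span B = V.span C"
    and add: "\<And>u v. T (u+v) = T u + T v" and sc: "\<And>a u. T (fscale a u) = fscale a (T u)"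
    and inv: "\<And>u. u \<in> V.span B \<Longrightarrow> T u \<in> V.span B"
  shows "(\<Sum>b\<in>B. V.representation B (T b) b) = (\<Sum>c\<in>C. V.representation C (T c) c)"
proof -
  have TC: "T c \<in> V.span B" if "c \<in> C" for c
    using inv that sp V.span_base[of c C] by auto
  have TB: "T b \<in> V.span B" if "b \<in> B" for b
    using inv that V.span_base[of b B] by auto
  have "V.representation B (T b) b = (\<Sum>c\<in>C. V.representation C b c * V.representation B (T c) b)"
    if b: "b \<in> B" for b
  proof -
    have bC: "b \<in> V.span C" using b sp V.span_base[of b B] by auto
    have "b = (\<Sum>c\<in>C. fscale (V.representation C b c) c)"
      using V.sum_representation_eq[OF iC bC fC] by simp
    then have "T b = (\<Sum>c\<in>C. fscale (V.representation C b c) (T c))"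
      by (metis (no_types, lifting) T_sum add sc sum.cong)
    then have "V.representation B (T b) = V.representation B (\<Sum>c\<in>C. fscale (V.representation C b c) (T c))"
      by simp
    also have "\<dots> = (\<lambda>bb. \<Sum>c\<in>C. V.representation B (fscale (V.representation C b c) (T c)) bb)"
      by (rule V.representation_sum[OF iB]) (use TC V.span_scale in auto)
    finally show ?thesis using V.representation_scale[OF iB TC] by simp
  qed
  then have "(\<Sum>b\<in>B. V.representation B (T b) b)
      = (\<Sum>b\<in>B. \<Sum>c\<in>C. V.representation C b c * V.representation B (T c) b)" by simp
  also have "\<dots> = (\<Sum>c\<in>C. \<Sum>b\<in>B. V.representation B (T c) b * V.representation C b c)"
    by (subst sum.swap) (simp add: mult.commute)
  also have "\<dots> = (\<Sum>c\<in>C. V.representation C (T c) c)"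
  proof (rule sum.cong[OF refl])
    fix c assume c: "c \<in> C"
    have bC: "b \<in> V.span C" if "b \<in> B" for b using that sp V.span_base[of b B] by auto
    have "T c = (\<Sum>b\<in>B. fscale (V.representation B (T c) b) b)"
      using V.sum_representation_eq[OF iB TC[OF c] fB] by simp
    then have "V.representation C (T c) = V.representation C (\<Sum>b\<in>B. fscale (V.representation B (T c) b) b)"
      by simp
    also have "\<dots> = (\<lambda>cc. \<Sum>b\<in>B. V.representation C (fscale (V.representation B (T c) b) b) cc)"
      by (rule V.representation_sum[OF iC]) (use bC V.span_scale in auto)
    finally show "(\<Sum>b\<in>B. V.representation B (T c) b * V.representation C b c) = V.representation C (T c) c"
      using V.representation_scale[OF iC bC] by simp
  qed
  finally show ?thesis .
qed



definition lower_op :: "(label \<Rightarrow> complex) \<Rightarrow> (label \<Rightarrow> complex)" where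
  "lower_op v x = (\<Sum>k\<in>set_mset (snd x).
      of_nat (count (fst x) k + 1) * v (add_mset k (fst x), snd x - {#k#}))"

lemma size_sum_count: "size M = (\<Sum>k\<in>set_mset M. count M k)"
  by (simp add: size_multiset_overloaded_eq)

lemma sum_remove_if:
  assumes "finite A"
  shows "sum h (A - {k}) = (\<Sum>l\<in>A. if l = k then 0 else h l)"
proof (cases "k \<in> A")
  case True
  then show ?thesis using assms
    by (simp add: sum.remove[of A k] sum.If_cases Diff_eq Int_commute)
next
  case False
  then show ?thesis by (auto intro!: sum.cong)
qed

lemma commutator:
  fixes v :: "label \<Rightarrow> complex"
  shows "raise_op (lower_op v) y - lower_op (raise_op v) y = of_int (e11 y) * v y"
proof -
  obtain M P where y: "y = (M,P)" by (cases y)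
  define cM where "cM k = (of_nat (count M k) :: complex)" for k
  define cP where "cP k = (of_nat (count P k) :: complex)" for k
  define H where "H k l = (cP k + 1) * (cM l + 1) * v (add_mset l M - {#k#}, add_mset k (P - {#l#}))" for k l
  have ef: "raise_op (lower_op v) y =
     (\<Sum>k\<in>set_mset M. (cP k + 1) * cM k * v y) + (\<Sum>k\<in>set_mset M. \<Sum>l\<in>set_mset P. if l = k then 0 else H k l)"
  proof -
    have "raise_op (lower_op v) y = (\<Sum>k\<in>set_mset M. (cP k + 1) * (cM k * v y + (\<Sum>l\<in>set_mset P. if l = k then 0 else (cM l + 1) * v (add_mset l M - {#k#}, add_mset k (P - {#l#})))))"
      unfolding raise_op_def y fst_conv snd_conv
    proof (rule sum.cong[OF refl])
      fix k assume k: "k \<in> set_mset M"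
      have "lower_op v (M - {#k#}, add_mset k P) =
        (\<Sum>l\<in>insert k (set_mset P). of_nat (count (M - {#k#}) l + 1) * v (add_mset l (M - {#k#}), add_mset k P - {#l#}))"
        by (simp add: lower_op_def)
      also have "\<dots> = of_nat (count (M - {#k#}) k + 1) * v (add_mset k (M - {#k#}), add_mset k P - {#k#})
          + (\<Sum>l\<in>set_mset P - {k}. of_nat (count (M - {#k#}) l + 1) * v (add_mset l (M - {#k#}), add_mset k P - {#l#}))"
        by (subst sum.insert_remove) auto
      also have "of_nat (count (M - {#k#}) k + 1) * v (add_mset k (M - {#k#}), add_mset k P - {#k#}) = cM k * v y"
        using k by (simp add: y cM_def insert_DiffM)
      also have "(\<Sum>l\<in>set_mset P - {k}. of_nat (count (M - {#k#}) l + 1) * v (add_mset l (M - {#k#}), add_mset k P - {#l#}))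
          = (\<Sum>l\<in>set_mset P. if l = k then 0 else (cM l + 1) * v (add_mset l M - {#k#}, add_mset k (P - {#l#})))"
        unfolding sum_remove_if[OF finite_set_mset]
        using k by (intro sum.cong refl) (auto simp: cM_def diff_union_single_conv[symmetric] Multiset.diff_add_mset_swap)
      finally show "of_nat (count P k + 1) * lower_op v (M - {#k#}, add_mset k P)
         = (cP k + 1) * (cM k * v (M,P) + (\<Sum>l\<in>set_mset P. if l = k then 0 else (cM l + 1) * v (add_mset l M - {#k#}, add_mset k (P - {#l#}))))"
        by (simp add: cP_def y)
    qed
    also have "\<dots> = (\<Sum>k\<in>set_mset M. (cP k + 1) * cM k * v y) + (\<Sum>k\<in>set_mset M. \<Sum>l\<in>set_mset P. if l = k then 0 else H k l)"
      unfolding distrib_left sum.distrib sum_distrib_left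
      by (intro arg_cong2[where f="(+)"] sum.cong refl) (auto simp: H_def y)
    finally show ?thesis .
  qed
  have fe: "lower_op (raise_op v) y =
     (\<Sum>l\<in>set_mset P. (cM l + 1) * cP l * v y) + (\<Sum>l\<in>set_mset P. \<Sum>k\<in>set_mset M. if l = k then 0 else H k l)"
  proof -
    have "lower_op (raise_op v) y = (\<Sum>l\<in>set_mset P. (cM l + 1) * (cP l * v y + (\<Sum>k\<in>set_mset M. if l = k then 0 else (cP k + 1) * v (add_mset l M - {#k#}, add_mset k (P - {#l#})))))"
      unfolding lower_op_def y fst_conv snd_conv
    proof (rule sum.cong[OF refl])
      fix l assume l: "l \<in> set_mset P"
      have "raise_op v (add_mset l M, P - {#l#}) =
        (\<Sum>k\<in>insert l (set_mset M). of_nat (count (P - {#l#}) k + 1) * v (add_mset l M - {#k#}, add_mset k (P - {#l#})))"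
        by (simp add: raise_op_def)
      also have "\<dots> = of_nat (count (P - {#l#}) l + 1) * v (add_mset l M - {#l#}, add_mset l (P - {#l#}))
          + (\<Sum>k\<in>set_mset M - {l}. of_nat (count (P - {#l#}) k + 1) * v (add_mset l M - {#k#}, add_mset k (P - {#l#})))"
        by (subst sum.insert_remove) auto
      also have "of_nat (count (P - {#l#}) l + 1) * v (add_mset l M - {#l#}, add_mset l (P - {#l#})) = cP l * v y"
        using l by (simp add: y cP_def insert_DiffM)
      also have "(\<Sum>k\<in>set_mset M - {l}. of_nat (count (P - {#l#}) k + 1) * v (add_mset l M - {#k#}, add_mset k (P - {#l#})))
          = (\<Sum>k\<in>set_mset M. if l = k then 0 else (cP k + 1) * v (add_mset l M - {#k#}, add_mset k (P - {#l#})))"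
        unfolding sum_remove_if[OF finite_set_mset]
        using l by (intro sum.cong refl) (auto simp: cP_def)
      finally show "of_nat (count M l + 1) * raise_op v (add_mset l M, P - {#l#})
         = (cM l + 1) * (cP l * v (M,P) + (\<Sum>k\<in>set_mset M. if l = k then 0 else (cP k + 1) * v (add_mset l M - {#k#}, add_mset k (P - {#l#}))))"
        by (simp add: cM_def y)
    qed
    also have "\<dots> = (\<Sum>l\<in>set_mset P. (cM l + 1) * cP l * v y) + (\<Sum>l\<in>set_mset P. \<Sum>k\<in>set_mset M. if l = k then 0 else H k l)"
      unfolding distrib_left sum.distrib sum_distrib_left
      by (intro arg_cong2[where f="(+)"] sum.cong refl) (auto simp: H_def y)
    finally show ?thesis .
  qed
  have swap: "(\<Sum>k\<in>set_mset M. \<Sum>l\<in>set_mset P. if l = k then 0 else H k l)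
            = (\<Sum>l\<in>set_mset P. \<Sum>k\<in>set_mset M. if l = k then 0 else H k l)"
    by (rule sum.swap)
  have cross: "(\<Sum>k\<in>set_mset M. cP k * cM k) = (\<Sum>k\<in>set_mset P. cM k * cP k)"
  proof -
    have "(\<Sum>k\<in>set_mset M. cP k * cM k) = (\<Sum>k\<in>set_mset (M+P). cP k * cM k)"
      by (rule sum.mono_neutral_left) (auto simp: cM_def)
    also have "\<dots> = (\<Sum>k\<in>set_mset P. cP k * cM k)"
      by (rule sum.mono_neutral_right) (auto simp: cP_def not_in_iff)
    also have "\<dots> = (\<Sum>k\<in>set_mset P. cM k * cP k)"
      by (simp add: mult.commute)
    finally show ?thesis .
  qed
  have sM: "(\<Sum>k\<in>set_mset M. cM k) = of_nat (size M)"
    by (simp add: cM_def size_sum_count)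
  have sP: "(\<Sum>k\<in>set_mset P. cP k) = of_nat (size P)"
    by (simp add: cP_def size_sum_count)
  have "raise_op (lower_op v) y - lower_op (raise_op v) y
      = (\<Sum>k\<in>set_mset M. (cP k + 1) * cM k) * v y - (\<Sum>l\<in>set_mset P. (cM l + 1) * cP l) * v y"
    unfolding ef fe swap sum_distrib_right by simp
  also have "\<dots> = ((\<Sum>k\<in>set_mset M. cP k * cM k) + (\<Sum>k\<in>set_mset M. cM k)
         - (\<Sum>k\<in>set_mset P. cM k * cP k) - (\<Sum>k\<in>set_mset P. cP k)) * v y"
    by (simp add: distrib_right sum.distrib algebra_simps)
  also have "\<dots> = of_int (e11 y) * v y"
    unfolding cross sM sP by (simp add: e11_def y)
  finally show ?thesis .
qed



lemma sum_mset_remove: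
  assumes "k \<in># M"
  shows "(\<Sum>i\<in>#M. g i) = g k + (\<Sum>i\<in>#M - {#k#}. (g i :: nat))"
  using assms by (metis insert_DiffM sum_mset.insert)

lemma deg2_down: "k \<in># M \<Longrightarrow> deg2 (M - {#k#}, add_mset k P) = deg2 (M,P)"
  by (simp add: deg2_def sum_mset_remove[of k M])

lemma size_rm: "k \<in># M \<Longrightarrow> size M = Suc (size (M - {#k#}))"
  by (metis insert_DiffM size_add_mset)
lemma e11_down: "k \<in># M \<Longrightarrow> e11 (M - {#k#}, add_mset k P) = e11 (M,P) - 2"
  unfolding e11_def using size_rm[of k M] by simp

lemma deg2_up: "k \<in># P \<Longrightarrow> deg2 (add_mset k M, P - {#k#}) = deg2 (M,P)"
  by (simp add: deg2_def sum_mset_remove[of k P])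

lemma e11_up: "k \<in># P \<Longrightarrow> e11 (add_mset k M, P - {#k#}) = e11 (M,P) + 2"
  unfolding e11_def using size_rm[of k P] by simp

lemma sum_nz: "sum g A \<noteq> 0 \<Longrightarrow> \<exists>a\<in>A. g a \<noteq> 0"
  by (meson sum.neutral)

lemma raise_supp:
  assumes "v \<in> Fs (Xs N j)"
  shows "raise_op v \<in> Fs (Xs N (j+2))"
  unfolding Fs_def
proof (intro CollectI allI impI)
  fix y assume "raise_op v y \<noteq> 0"
  then obtain k where k: "k \<in># fst y" and nz: "v (fst y - {#k#}, add_mset k (snd y)) \<noteq> 0"
    unfolding raise_op_def using sum_nz by fastforce
  then have "(fst y - {#k#}, add_mset k (snd y)) \<in> Xs N j" using assms by (auto simp: Fs_def)
  then show "y \<in> Xs N (j+2)"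
    using deg2_down[OF k, of "snd y"] e11_down[OF k, of "snd y"] by (auto simp: Xs_def)
qed

lemma lower_supp:
  assumes "v \<in> Fs (Xs N j)"
  shows "lower_op v \<in> Fs (Xs N (j-2))"
  unfolding Fs_def
proof (intro CollectI allI impI)
  fix y assume "lower_op v y \<noteq> 0"
  then obtain k where k: "k \<in># snd y" and nz: "v (add_mset k (fst y), snd y - {#k#}) \<noteq> 0"
    unfolding lower_op_def using sum_nz by fastforce
  then have "(add_mset k (fst y), snd y - {#k#}) \<in> Xs N j" using assms by (auto simp: Fs_def)
  then show "y \<in> Xs N (j-2)"
    using deg2_up[OF k, of "fst y"] e11_up[OF k, of "fst y"] by (auto simp: Xs_def)
qed

lemma raise_add: "raise_op (u + v) = raise_op u + raise_op v"
  by (auto simp: raise_op_def fun_eq_iff sum.distrib distrib_left)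
lemma raise_scale: "raise_op (fscale a u) = fscale a (raise_op u)"
  by (auto simp: raise_op_def fun_eq_iff sum_distrib_left mult.left_commute)
lemma lower_add: "lower_op (u + v) = lower_op u + lower_op v"
  by (auto simp: lower_op_def fun_eq_iff sum.distrib distrib_left)
lemma lower_scale: "lower_op (fscale a u) = fscale a (lower_op u)"
  by (auto simp: lower_op_def fun_eq_iff sum_distrib_left mult.left_commute)

definition wt :: "label \<Rightarrow> real" where
  "wt x = (\<Prod>i\<in>set_mset (fst x + snd x). fact (count (fst x) i) * fact (count (snd x) i))"

lemma wt_pos: "wt x > 0"
  unfolding wt_def by (intro prod_pos) auto

lemma wt_move:
  assumes k: "k \<in># M"
  shows "wt (M,P) * (count P k + 1) = wt (M - {#k#}, add_mset k P) * (count (M - {#k#}) k + 1)"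
proof -
  have S: "M - {#k#} + add_mset k P = M + P" using k by (simp add: insert_DiffM)
  let ?S = "set_mset (M + P)"
  have kS: "k \<in> ?S" using k by simp
  have rest: "(\<Prod>i\<in>?S - {k}. fact (count M i) * fact (count P i))
     = (\<Prod>i\<in>?S - {k}. fact (count (M - {#k#}) i) * fact (count (add_mset k P) i) :: real)"
    by (intro prod.cong) auto
  have cM: "count M k = Suc (count (M - {#k#}) k)" using k by (simp add: Suc_pred)
  have "wt (M,P) = fact (count M k) * fact (count P k) * (\<Prod>i\<in>?S - {k}. fact (count M i) * fact (count P i))"
    unfolding wt_def fst_conv snd_conv using kS by (simp add: prod.remove)
  moreover have "wt (M - {#k#}, add_mset k P) = fact (count (M - {#k#}) k) * fact (count P k + 1) *
      (\<Prod>i\<in>?S - {k}. fact (count (M - {#k#}) i) * fact (count (add_mset k P) i))"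
    unfolding wt_def fst_conv snd_conv S using kS by (simp add: prod.remove)
  ultimately show ?thesis
    unfolding rest cM by (simp add: algebra_simps)
qed

definition ip :: "label set \<Rightarrow> (label \<Rightarrow> complex) \<Rightarrow> (label \<Rightarrow> complex) \<Rightarrow> complex" where
  "ip Z u v = (\<Sum>x\<in>Z. of_real (wt x) * u x * cnj (v x))"

lemma ip_cnj: "ip Z u v = cnj (ip Z v u)"
  by (simp add: ip_def mult.commute mult.left_commute)

lemma ip_self: "ip Z u u = of_real (\<Sum>x\<in>Z. wt x * (cmod (u x))^2)"
  unfolding ip_def of_real_sum
proof (intro sum.cong refl)
  fix x
  have "of_real ((cmod (u x))^2) = u x * cnj (u x)" by (rule complex_norm_square)
  then show "of_real (wt x) * u x * cnj (u x) = complex_of_real (wt x * (cmod (u x))\<^sup>2)"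
    by (simp only: of_real_mult mult.assoc)
qed

lemma adjoint:
  "ip (Xs N (j+2)) (raise_op u) v = ip (Xs N j) u (lower_op v)"
proof -
  define G where "G = (\<lambda>(y,k). of_real (wt y) * of_nat (count (snd y) k + 1) * u (fst y - {#k#}, add_mset k (snd y)) * cnj (v y))"
  define H where "H = (\<lambda>(x,k). of_real (wt x) * of_nat (count (fst x) k + 1) * u x * cnj (v (add_mset k (fst x), snd x - {#k#})))"
  have "ip (Xs N (j+2)) (raise_op u) v = (\<Sum>y\<in>Xs N (j+2). \<Sum>k\<in>set_mset (fst y). G (y,k))"
    unfolding ip_def raise_op_def G_def by (simp add: sum_distrib_left sum_distrib_right mult.assoc mult.left_commute)
  also have "\<dots> = sum G (SIGMA y:Xs N (j+2). set_mset (fst y))"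
    by (subst sum.Sigma) (auto simp: finite_Xs split_def)
  also have "\<dots> = sum H (SIGMA x:Xs N j. set_mset (snd x))"
  proof (rule sum.reindex_bij_witness[where i = "\<lambda>(x,k). ((add_mset k (fst x), snd x - {#k#}), k)"
                                      and j = "\<lambda>(y,k). ((fst y - {#k#}, add_mset k (snd y)), k)"])
    fix a assume a: "a \<in> (SIGMA y:Xs N (j+2). set_mset (fst y))"
    obtain M P k where a': "a = ((M,P),k)" by (metis prod.collapse)
    have k: "k \<in># M" and y: "(M,P) \<in> Xs N (j+2)" using a a' by auto
    show "(\<lambda>(x,k). ((add_mset k (fst x), snd x - {#k#}), k)) ((\<lambda>(y,k). ((fst y - {#k#}, add_mset k (snd y)), k)) a) = a"
      using k a' by (simp add: insert_DiffM)
    show "(\<lambda>(y,k). ((fst y - {#k#}, add_mset k (snd y)), k)) a \<in> (SIGMA x:Xs N j. set_mset (snd x))"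
      using k y a' deg2_down[OF k, of P] e11_down[OF k, of P] by (auto simp: Xs_def)
    show "H ((\<lambda>(y,k). ((fst y - {#k#}, add_mset k (snd y)), k)) a) = G a"
    proof -
      have w: "wt (M,P) * (count P k + 1) = wt (M - {#k#}, add_mset k P) * (count (M - {#k#}) k + 1)"
        by (rule wt_move[OF k])
      have "of_real (wt (M,P)) * of_nat (count P k + 1) = (of_real (wt (M - {#k#}, add_mset k P)) * of_nat (count (M - {#k#}) k + 1) :: complex)"
        using arg_cong[OF w, of "of_real :: real \<Rightarrow> complex"] by simp
      then show ?thesis using a' k by (simp add: G_def H_def insert_DiffM)
    qed
  next
    fix b assume b: "b \<in> (SIGMA x:Xs N j. set_mset (snd x))"
    obtain M P k where b': "b = ((M,P),k)" by (metis prod.collapse)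
    have k: "k \<in># P" and x: "(M,P) \<in> Xs N j" using b b' by auto
    show "(\<lambda>(y,k). ((fst y - {#k#}, add_mset k (snd y)), k)) ((\<lambda>(x,k). ((add_mset k (fst x), snd x - {#k#}), k)) b) = b"
      using k b' by (simp add: insert_DiffM)
    show "(\<lambda>(x,k). ((add_mset k (fst x), snd x - {#k#}), k)) b \<in> (SIGMA y:Xs N (j+2). set_mset (fst y))"
      using k x b' deg2_up[OF k, of M] e11_up[OF k, of M] by (auto simp: Xs_def)
  qed
  also have "\<dots> = (\<Sum>x\<in>Xs N j. \<Sum>k\<in>set_mset (snd x). H (x,k))"
    by (subst sum.Sigma) (auto simp: finite_Xs split_def)
  also have "\<dots> = ip (Xs N j) u (lower_op v)"
    unfolding ip_def lower_op_def H_def by (simp add: sum_distrib_left mult.assoc mult.left_commute)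
  finally show ?thesis .
qed



lemma ef_inj:
  assumes j: "j \<ge> 1" and w: "w \<in> Fs (Xs N j)"
    and z: "\<forall>y\<in>Xs N j. raise_op (lower_op w) y = 0"
  shows "w = 0"
proof -
  let ?Y = "Xs N j"
  define A where "A = (\<Sum>x\<in>Xs N (j+2). wt x * (cmod (raise_op w x))^2)"
  define B where "B = (\<Sum>x\<in>?Y. wt x * (cmod (w x))^2)"
  have A0: "A \<ge> 0" unfolding A_def by (intro sum_nonneg) (simp add: wt_pos less_imp_le)
  have B0: "B \<ge> 0" unfolding B_def by (intro sum_nonneg) (simp add: wt_pos less_imp_le)
  have c: "raise_op (lower_op w) y = lower_op (raise_op w) y + of_int j * w y" if "y \<in> ?Y" for y
    using commutator[of w y] that by (simp add: Xs_def algebra_simps)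
  have "0 = ip ?Y (raise_op (lower_op w)) w"
    unfolding ip_def using z by simp
  also have "\<dots> = ip ?Y (lower_op (raise_op w)) w + of_int j * ip ?Y w w"
    unfolding ip_def using c by (simp add: sum.distrib sum_distrib_left algebra_simps)
  also have "ip ?Y (lower_op (raise_op w)) w = cnj (ip ?Y w (lower_op (raise_op w)))"
    by (rule ip_cnj)
  also have "ip ?Y w (lower_op (raise_op w)) = ip (Xs N (j+2)) (raise_op w) (raise_op w)"
    by (rule adjoint[symmetric])
  also have "\<dots> = of_real A" unfolding A_def by (rule ip_self)
  also have "ip ?Y w w = of_real B" unfolding B_def by (rule ip_self)
  finally have "0 = (of_real (A + of_int j * B) :: complex)" by simp
  then have "A + of_int j * B = 0" by (metis of_real_eq_0_iff)
  moreover have "of_int j * B \<ge> 0" using j B0 by simp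
  ultimately have "of_int j * B = 0" using A0 by linarith
  then have "B = 0" using j by simp
  then have "\<forall>x\<in>?Y. wt x * (cmod (w x))^2 = 0"
    unfolding B_def by (subst sum_nonneg_eq_0_iff[symmetric]) (auto simp: finite_Xs wt_pos less_imp_le)
  then have "\<forall>x\<in>?Y. w x = 0" using wt_pos by (metis mult_eq_0_iff less_irrefl norm_eq_zero power_eq_0_iff)
  then show "w = 0" using w by (auto simp: Fs_def fun_eq_iff)
qed



lemma hom_intro:
  assumes "\<And>u v. f (u+v) = f u + f v" "\<And>a u. f (fscale a u) = fscale a (f u)"
  shows "module_hom (fscale :: complex \<Rightarrow> _) (fscale :: complex \<Rightarrow> _) f"
  by (rule module_hom.intro, rule V.module_axioms, rule V.module_axioms, unfold_locales) (use assms in auto)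

lemma hom_raise: "module_hom fscale fscale raise_op"
  by (rule hom_intro) (auto simp: raise_add raise_scale)
lemma hom_lower: "module_hom fscale fscale lower_op"
  by (rule hom_intro) (auto simp: lower_add lower_scale)
lemma hom_L: "module_hom fscale fscale (\<lambda>w. raise_op (lower_op w))"
  by (rule hom_intro) (auto simp: raise_add raise_scale lower_add lower_scale)

lemma sum_fun_apply: "(sum f A) x = (\<Sum>a\<in>A. f a x)"
  by (induction A rule: infinite_finite_induct) auto

lemma subspace_Fs: "V.subspace (Fs Z)"
  unfolding V.subspace_def Fs_def by (auto, metis add_0)

lemma dl_in_Fs: "x \<in> Z \<Longrightarrow> dl x \<in> Fs Z"
  by (auto simp: Fs_def dl_def)

lemma inj_dl: "inj dl"
  by (rule injI) (metis dl_def one_neq_zero)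

lemma Fs_sum_dl:
  assumes "finite Z" "v \<in> Fs Z"
  shows "v = (\<Sum>x\<in>Z. fscale (v x) (dl x))"
proof
  fix y
  have "(\<Sum>x\<in>Z. fscale (v x) (dl x)) y = (\<Sum>x\<in>Z. v x * dl x y)"
    by (simp add: sum_fun_apply fscale_def)
  also have "\<dots> = (if y \<in> Z then v y else 0)"
    using assms(1) by (simp add: dl_def if_distrib[where f="\<lambda>t. _ * t"] sum.delta' cong: if_cong)
  also have "\<dots> = v y" using assms(2) by (auto simp: Fs_def)
  finally show "v y = (\<Sum>x\<in>Z. fscale (v x) (dl x)) y" by simp
qed

lemma span_dl:
  assumes "finite Z"
  shows "V.span (dl ` Z) = Fs Z"
proof
  show "V.span (dl ` Z) \<subseteq> Fs Z"
    by (rule V.span_minimal) (auto intro: dl_in_Fs subspace_Fs)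
  show "Fs Z \<subseteq> V.span (dl ` Z)"
  proof
    fix v assume v: "v \<in> Fs Z"
    have "(\<Sum>x\<in>Z. fscale (v x) (dl x)) \<in> V.span (dl ` Z)"
      by (intro V.span_sum V.span_scale V.span_base) auto
    then show "v \<in> V.span (dl ` Z)" using Fs_sum_dl[OF assms v] by simp
  qed
qed

lemma indep_dl: "V.independent (dl ` Z)"
  unfolding V.independent_explicit_finite_subsets
proof (intro allI impI ballI)
  fix S u v assume S: "S \<subseteq> dl ` Z" "finite S" and s: "(\<Sum>v\<in>S. fscale (u v) v) = 0" and v: "v \<in> S"
  obtain x where x: "v = dl x" using S v by auto
  have "(\<Sum>w\<in>S. fscale (u w) w) x = u v"
  proof -
    have "(\<Sum>w\<in>S. fscale (u w) w) x = (\<Sum>w\<in>S. u w * w x)" by (simp add: sum_fun_apply)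
    also have "\<dots> = (\<Sum>w\<in>S. if w = v then u w else 0)"
    proof (intro sum.cong refl)
      fix w assume "w \<in> S"
      then obtain z where z: "w = dl z" using S by auto
      show "u w * w x = (if w = v then u w else 0)"
      proof (cases "z = x")
        case True then show ?thesis using x z by (simp add: dl_def)
      next
        case False
        then have "w \<noteq> v" using x z inj_dl by (metis injD)
        then show ?thesis using x z False by (simp add: dl_def)
      qed
    qed
    also have "\<dots> = u v" using v S by (simp add: sum.delta')
    finally show ?thesis .
  qed
  then show "u v = 0" using s by simp
qed

lemma span_from_card:
  assumes fT: "finite T" and iI: "V.independent I" and IT: "I \<subseteq> V.span T"
    and fI: "finite I" and c: "card I = card T"
  shows "T \<subseteq> V.span I"
proof
  fix t assume t: "t \<in> T"
  show "t \<in> V.span I"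
  proof (rule ccontr)
    assume n: "t \<notin> V.span I"
    have "V.independent (insert t I)" by (rule V.independent_insertI[OF n iI])
    moreover have "insert t I \<subseteq> V.span T" using IT t V.span_base by auto
    ultimately have "card (insert t I) \<le> card T" using V.independent_span_bound[OF fT] by blast
    moreover have "t \<notin> I" using n V.span_base by auto
    ultimately show False using fI c by simp
  qed
qed



lemma L_supp: "w \<in> Fs (Xs N j) \<Longrightarrow> raise_op (lower_op w) \<in> Fs (Xs N j)"
  using raise_supp[OF lower_supp[of w N j]] by simp

lemma injL:
  assumes j: "j \<ge> 1"
  shows "inj_on (\<lambda>w. raise_op (lower_op w)) (Fs (Xs N j))"
  unfolding module_hom.inj_on_iff_eq_0[OF hom_L subspace_Fs]
  using ef_inj[OF j] by auto

lemma surj_L: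
  assumes j: "j \<ge> 1" and g: "g \<in> Fs (Xs N j)"
  shows "\<exists>w\<in>Fs (Xs N j). raise_op (lower_op w) = g"
proof -
  let ?Y = "Xs N j"
  let ?L = "\<lambda>w. raise_op (lower_op w)"
  define J where "J = ?L ` dl ` ?Y"
  have sY: "V.span (dl ` ?Y) = Fs ?Y" by (rule span_dl[OF finite_Xs])
  have iJ: "V.independent J"
    unfolding J_def using module_hom.independent_injective_image[OF hom_L indep_dl] injL[OF j] sY by simp
  have inj1: "inj_on ?L (dl ` ?Y)"
    using injL[OF j] dl_in_Fs by (meson image_subsetI inj_on_subset)
  have cJ: "card J = card (dl ` ?Y)"
    unfolding J_def by (rule card_image[OF inj1])
  have fJ: "finite J" unfolding J_def using finite_Xs by simp
  have JY: "J \<subseteq> V.span (dl ` ?Y)"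
    unfolding J_def sY by (auto intro!: L_supp dl_in_Fs)
  have "dl ` ?Y \<subseteq> V.span J"
    by (rule span_from_card[OF _ iJ JY fJ cJ]) (simp add: finite_Xs)
  then have "V.span (dl ` ?Y) \<subseteq> V.span J"
    by (rule V.span_minimal[OF _ V.subspace_span])
  also have "V.span J = ?L ` Fs ?Y"
    unfolding J_def module_hom.span_image[OF hom_L] sY ..
  finally show ?thesis using g sY by auto
qed

lemma Lspace_eq: "Lspace m N = {v \<in> Fs (Xs N (int m)). raise_op v = 0}"
  unfolding Lspace_def Fs_def Xs_def by auto

lemma raise_zero: "raise_op 0 = 0"
  by (auto simp: raise_op_def fun_eq_iff)

lemma subspace_U: "V.subspace (Lspace m N)"
  unfolding Lspace_eq V.subspace_def
  using subspace_Fs[unfolded V.subspace_def]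
  by (auto simp: raise_add raise_scale raise_zero)



lemma T_add: fixes c :: "'a \<Rightarrow> complex" shows "(\<lambda>x. c x * (u + v) x) = (\<lambda>x. c x * u x) + (\<lambda>x. c x * v x)"
  by (auto simp: fun_eq_iff distrib_left)

lemma trace_main:
  fixes c :: "label \<Rightarrow> complex"
  assumes cm: "\<And>M P k. k \<in># M \<Longrightarrow> c (M - {#k#}, add_mset k P) = c (M,P)"
  shows "trace_on (Lspace m N) (\<lambda>v x. c x * v x)
     = (\<Sum>x\<in>Xs N (int m). c x) - (\<Sum>x\<in>Xs N (int m + 2). c x)"
proof -
  define T where "T = (\<lambda>(v::label \<Rightarrow> complex) x. c x * v x)"
  let ?X = "Xs N (int m)" and ?Y = "Xs N (int m + 2)"
  let ?U = "Lspace m N"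
  have j: "int m + 2 \<ge> 1" by simp
  have cm2: "c (add_mset k M, P - {#k#}) = c (M,P)" if "k \<in># P" for M P k
    using cm[of k "add_mset k M" "P - {#k#}"] that by (simp add: insert_DiffM)
  have Tadd: "T (u + v) = T u + T v" for u v by (auto simp: T_def fun_eq_iff distrib_left)
  have Tsc: "T (fscale a u) = fscale a (T u)" for a u by (auto simp: T_def fun_eq_iff)
  have Traise: "raise_op (T v) = T (raise_op v)" for v
  proof
    fix y :: label
    obtain M P where y: "y = (M,P)" by (cases y)
    show "raise_op (T v) y = T (raise_op v) y"
      unfolding raise_op_def T_def y fst_conv snd_conv
      by (simp add: sum_distrib_left cm mult.left_commute cong: sum.cong)
  qed
  have Tlower: "lower_op (T v) = T (lower_op v)" for v
  proof
    fix y :: label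
    obtain M P where y: "y = (M,P)" by (cases y)
    show "lower_op (T v) y = T (lower_op v) y"
      unfolding lower_op_def T_def y fst_conv snd_conv
      by (simp add: sum_distrib_left cm2 mult.left_commute cong: sum.cong)
  qed
  have TFs: "T v \<in> Fs Z" if "v \<in> Fs Z" for v Z using that by (auto simp: Fs_def T_def)
  have TU: "T v \<in> ?U" if "v \<in> ?U" for v
    using that unfolding Lspace_eq by (auto simp: Traise TFs) (simp add: T_def fun_eq_iff)
  have sX: "V.span (dl ` ?X) = Fs ?X" by (rule span_dl[OF finite_Xs])
  have sY: "V.span (dl ` ?Y) = Fs ?Y" by (rule span_dl[OF finite_Xs])
  have UX: "?U \<subseteq> Fs ?X" unfolding Lspace_eq by auto
  define P where "P = (\<lambda>B. B \<subseteq> ?U \<and> \<not> V.dependent B \<and> V.span B = ?U)"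
  define B0 where "B0 = (SOME B. P B)"
  have "\<exists>B. P B"
  proof -
    obtain B where B: "B \<subseteq> ?U" "V.independent B" "?U \<subseteq> V.span B" "card B = V.dim ?U"
      by (rule V.basis_exists)
    have "V.span B \<subseteq> ?U" using B(1) by (rule V.span_minimal[OF _ subspace_U])
    then show ?thesis using B unfolding P_def by blast
  qed
  then have PB0: "P B0" unfolding B0_def by (rule someI_ex)
  then have B0U: "B0 \<subseteq> ?U" and iB0: "V.independent B0" and sB0: "V.span B0 = ?U"
    unfolding P_def by auto
  have fB0: "finite B0"
    using V.independent_span_bound[of "dl ` ?X" B0] iB0 B0U UX sX finite_Xs by auto
  have tr: "trace_on ?U T = (\<Sum>b\<in>B0. V.representation B0 (T b) b)"
    unfolding trace_on_def B0_def[symmetric, unfolded P_def] Let_def by simp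
  define g where "g = (\<lambda>y. lower_op (dl y))"
  define I where "I = g ` ?Y"
  have lowFs: "lower_op w \<in> Fs ?X" if "w \<in> Fs ?Y" for w
    using lower_supp[OF that] by simp
  have inj_low: "inj_on lower_op (Fs ?Y)"
  proof (rule inj_onI)
    fix u v assume u: "u \<in> Fs ?Y" and v: "v \<in> Fs ?Y" and e: "lower_op u = lower_op v"
    have "raise_op (lower_op u) = raise_op (lower_op v)" using e by simp
    then show "u = v" using injL[OF j] u v by (meson inj_onD)
  qed
  have iI: "V.independent I"
    unfolding I_def g_def image_image[symmetric]
    using module_hom.independent_injective_image[OF hom_lower indep_dl] inj_low sY by simp
  have inj_g: "inj_on g ?Y"
  proof (rule inj_onI)
    fix x y assume x: "x \<in> ?Y" and y: "y \<in> ?Y" and e: "g x = g y"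
    have "dl x = dl y" using inj_onD[OF inj_low e[unfolded g_def] dl_in_Fs[OF x] dl_in_Fs[OF y]] .
    then show "x = y" using inj_dl by (meson injD)
  qed
  have fI: "finite I" unfolding I_def using finite_Xs by simp
  have sI: "V.span I = lower_op ` Fs ?Y"
    unfolding I_def g_def image_image[symmetric] module_hom.span_image[OF hom_lower] sY ..
  have key: "w = 0" if w: "w \<in> Fs ?Y" and r: "raise_op (lower_op w) = 0" for w
    using ef_inj[OF j w] r by simp
  have disj: "B0 \<inter> I = {}"
  proof (rule ccontr)
    assume "B0 \<inter> I \<noteq> {}"
    then obtain y where y: "y \<in> ?Y" "g y \<in> B0" unfolding I_def by auto
    then have "raise_op (lower_op (dl y)) = 0" using B0U unfolding Lspace_eq g_def by auto
    then have "dl y = 0" using key dl_in_Fs[OF y(1)] by blast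
    then have "dl y y = 0" by simp
    then show False by (simp add: dl_def)
  qed
  define BB where "BB = B0 \<union> I"
  have fBB: "finite BB" unfolding BB_def using fB0 fI by simp
  have iBB: "V.independent BB"
    unfolding V.independent_explicit_finite_subsets
  proof (intro allI impI ballI)
    fix S u v assume S: "S \<subseteq> BB" "finite S" and s: "(\<Sum>v\<in>S. fscale (u v) v) = 0" and v: "v \<in> S"
    define p where "p = (\<Sum>v\<in>S \<inter> B0. fscale (u v) v)"
    define q where "q = (\<Sum>v\<in>S \<inter> I. fscale (u v) v)"
    have Seq: "S = (S \<inter> B0) \<union> (S \<inter> I)" using S unfolding BB_def by auto
    have "(\<Sum>v\<in>S. fscale (u v) v) = (\<Sum>v\<in>(S \<inter> B0) \<union> (S \<inter> I). fscale (u v) v)"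
      using Seq by (rule arg_cong)
    also have "\<dots> = p + q" unfolding p_def q_def
      by (rule sum.union_disjoint) (use S(2) disj in auto)
    finally have "p + q = 0" using s by simp
    have pU: "p \<in> ?U" unfolding p_def sB0[symmetric]
      by (intro V.span_sum V.span_scale V.span_base) auto
    have "q \<in> V.span I" unfolding q_def
      by (intro V.span_sum V.span_scale V.span_base) auto
    then obtain w where w: "w \<in> Fs ?Y" and qw: "q = lower_op w" unfolding sI by auto
    have "q = - p" using \<open>p + q = 0\<close> by (simp add: eq_neg_iff_add_eq_0 add.commute)
    then have "q \<in> ?U" using pU V.subspace_neg[OF subspace_U] by simp
    then have "raise_op (lower_op w) = 0" unfolding Lspace_eq qw by simp
    then have "w = 0" by (rule key[OF w])
    then have q0: "q = 0" unfolding qw by (simp add: module_hom.zero[OF hom_lower])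
    then have p0: "p = 0" using \<open>p + q = 0\<close> by simp
    show "u v = 0"
    proof (cases "v \<in> B0")
      case True
      then show ?thesis
        using iB0[unfolded V.independent_explicit_finite_subsets, rule_format, of "S \<inter> B0" u v] p0 S(2) v
        unfolding p_def by blast
    next
      case False
      then have "v \<in> I" using v S unfolding BB_def by auto
      then show ?thesis
        using iI[unfolded V.independent_explicit_finite_subsets, rule_format, of "S \<inter> I" u v] q0 S(2) v
        unfolding q_def by blast
    qed
  qed
  have sBB: "V.span BB = Fs ?X"
  proof
    have "B0 \<subseteq> Fs ?X" using B0U UX by (rule order_trans)
    moreover have "I \<subseteq> Fs ?X" unfolding I_def g_def by (auto intro!: lowFs dl_in_Fs)
    ultimately have "BB \<subseteq> Fs ?X" unfolding BB_def by (rule Un_least)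
    then show "V.span BB \<subseteq> Fs ?X" by (rule V.span_minimal[OF _ subspace_Fs])
    show "Fs ?X \<subseteq> V.span BB"
    proof
      fix v assume v: "v \<in> Fs ?X"
      have "raise_op v \<in> Fs ?Y" using raise_supp[OF v] by simp
      then obtain w where w: "w \<in> Fs ?Y" and rw: "raise_op (lower_op w) = raise_op v"
        using surj_L[OF j] by blast
      have "v - lower_op w \<in> ?U"
        unfolding Lspace_eq using v lowFs[OF w] subspace_Fs[unfolded V.subspace_def]
        by (auto simp: module_hom.diff[OF hom_raise] rw V.subspace_diff[OF subspace_Fs])
      then have a: "v - lower_op w \<in> V.span BB"
        unfolding sB0[symmetric] BB_def by (meson V.span_mono in_mono sup_ge1)
      have "lower_op w \<in> V.span I" unfolding sI using w by auto
      then have b: "lower_op w \<in> V.span BB"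
        unfolding BB_def by (meson V.span_mono in_mono sup_ge2)
      have "v = (v - lower_op w) + lower_op w" by simp
      then show "v \<in> V.span BB" using V.span_add[OF a b] by metis
    qed
  qed
  have TBB: "T u \<in> V.span BB" if "u \<in> V.span BB" for u using that sBB TFs by auto
  have eq: "(\<Sum>b\<in>BB. V.representation BB (T b) b) = (\<Sum>b\<in>dl ` ?X. V.representation (dl ` ?X) (T b) b)"
    by (rule trace_basis_indep[OF iBB indep_dl fBB _ _ Tadd Tsc TBB]) (use finite_Xs sBB sX in auto)
  have Tdl: "T (dl x) = fscale (c x) (dl x)" for x by (auto simp: T_def dl_def fun_eq_iff)
  have rhs: "(\<Sum>b\<in>dl ` ?X. V.representation (dl ` ?X) (T b) b) = (\<Sum>x\<in>?X. c x)"
  proof -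
    have "(\<Sum>b\<in>dl ` ?X. V.representation (dl ` ?X) (T b) b) = (\<Sum>x\<in>?X. V.representation (dl ` ?X) (T (dl x)) (dl x))"
      by (rule sum.reindex[unfolded comp_def]) (meson inj_dl inj_on_subset subset_UNIV)
    also have "\<dots> = (\<Sum>x\<in>?X. c x)"
    proof (intro sum.cong refl)
      fix x assume x: "x \<in> ?X"
      have "V.representation (dl ` ?X) (fscale (c x) (dl x)) = (\<lambda>b. c x * V.representation (dl ` ?X) (dl x) b)"
        by (rule V.representation_scale[OF indep_dl]) (rule V.span_base, use x in simp)
      then show "V.representation (dl ` ?X) (T (dl x)) (dl x) = c x"
        using V.representation_basis[OF indep_dl, of "dl x" ?X] x by (simp add: Tdl)
    qed
    finally show ?thesis .
  qed
  have lhs1: "(\<Sum>b\<in>B0. V.representation BB (T b) b) = (\<Sum>b\<in>B0. V.representation B0 (T b) b)"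
  proof (intro sum.cong refl)
    fix b assume b: "b \<in> B0"
    have "T b \<in> V.span B0" using TU[of b] b B0U sB0 by auto
    then show "V.representation BB (T b) b = V.representation B0 (T b) b"
      using V.representation_extend[OF iBB _ , of "T b" B0] unfolding BB_def by auto
  qed
  have lhs2: "(\<Sum>b\<in>I. V.representation BB (T b) b) = (\<Sum>y\<in>?Y. c y)"
  proof -
    have "(\<Sum>b\<in>I. V.representation BB (T b) b) = (\<Sum>y\<in>?Y. V.representation BB (T (g y)) (g y))"
      unfolding I_def by (rule sum.reindex[OF inj_g, unfolded comp_def])
    also have "\<dots> = (\<Sum>y\<in>?Y. c y)"
    proof (intro sum.cong refl)
      fix y assume y: "y \<in> ?Y"
      have gB: "g y \<in> BB" using y unfolding BB_def I_def by auto
      have "T (g y) = fscale (c y) (g y)"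
        unfolding g_def Tlower[symmetric] Tdl module_hom.scale[OF hom_lower] ..
      moreover have "V.representation BB (fscale (c y) (g y)) = (\<lambda>b. c y * V.representation BB (g y) b)"
        by (rule V.representation_scale[OF iBB]) (use gB V.span_base in auto)
      ultimately show "V.representation BB (T (g y)) (g y) = c y"
        using V.representation_basis[OF iBB gB] by simp
    qed
    finally show ?thesis .
  qed
  have "(\<Sum>b\<in>BB. V.representation BB (T b) b)
      = (\<Sum>b\<in>B0. V.representation BB (T b) b) + (\<Sum>b\<in>I. V.representation BB (T b) b)"
    unfolding BB_def by (rule sum.union_disjoint[OF fB0 fI disj])
  then have "(\<Sum>x\<in>?X. c x) = trace_on ?U T + (\<Sum>y\<in>?Y. c y)"
    unfolding eq rhs lhs1 lhs2 tr[symmetric] .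
  then have "trace_on ?U T = (\<Sum>x\<in>?X. c x) - (\<Sum>y\<in>?Y. c y)"
    by (simp add: algebra_simps)
  then show ?thesis unfolding T_def .
qed



lemma Dval_eq: "Dval w x = (\<Sum>k\<in>#fst x + snd x. w^(2*k+1)) - (\<Sum>k\<in>#fst x + snd x. (inverse w)^(2*k+1))
     + (1 / (inverse w - w) - 1 / (w - inverse w))"
  by (simp add: Dval_def Aval_def algebra_simps)

lemma Dval_move: "k \<in># M \<Longrightarrow> Dval w (M - {#k#}, add_mset k P) = Dval w (M,P)"
  unfolding Dval_eq by (simp add: insert_DiffM)

lemma signs_Suc: "signs (Suc n) = (\<lambda>(e, es). e # es) ` ({-1,1} \<times> signs n)"
proof
  show "signs (Suc n) \<subseteq> (\<lambda>(e, es). e # es) ` ({-1,1} \<times> signs n)"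
  proof
    fix xs assume "xs \<in> signs (Suc n)"
    then obtain e es where "xs = e # es" "length es = n" "e \<in> {-1,1}" "set es \<subseteq> {-1,1}"
      unfolding signs_def by (cases xs) auto
    then show "xs \<in> (\<lambda>(e, es). e # es) ` ({-1,1} \<times> signs n)"
      unfolding signs_def by force
  qed
  show "(\<lambda>(e, es). e # es) ` ({-1,1} \<times> signs n) \<subseteq> signs (Suc n)"
    unfolding signs_def by auto
qed

lemma finite_signs: "finite (signs n)"
  by (induction n) (auto simp: signs_Suc, simp add: signs_def)

lemma expand:
  fixes f :: "complex \<Rightarrow> int \<Rightarrow> complex"
  shows "(\<Prod>w\<leftarrow>ws. f w 1 - f w (-1)) =
    (\<Sum>es\<in>signs (length ws). of_int (prod_list es) * (\<Prod>i<length ws. f (ws!i) (es!i)))"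
proof (induction ws)
  case Nil
  have "signs 0 = {[]}" by (auto simp: signs_def)
  then show ?case by simp
next
  case (Cons w ws)
  let ?n = "length ws"
  let ?S = "\<lambda>es. of_int (prod_list es) * (\<Prod>i<?n. f (ws!i) (es!i))"
  have inj: "inj_on (\<lambda>(e, es). e # es) ({-1,1::int} \<times> signs ?n)"
    by (auto simp: inj_on_def)
  define F where "F = (\<lambda>es. of_int (prod_list es) * (\<Prod>i<Suc ?n. f ((w#ws)!i) (es!i)))"
  have "(\<Sum>es\<in>signs (length (w#ws)). of_int (prod_list es) * (\<Prod>i<length (w#ws). f ((w#ws)!i) (es!i)))
      = (\<Sum>es\<in>signs (Suc ?n). F es)" by (simp add: F_def)
  also have "\<dots> = (\<Sum>p\<in>{-1,1::int} \<times> signs ?n. F ((\<lambda>(e, es). e # es) p))"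
    unfolding signs_Suc by (rule sum.reindex[OF inj, unfolded comp_def])
  also have "\<dots> = (\<Sum>(e,es)\<in>{-1,1::int} \<times> signs ?n. of_int e * f w e * ?S es)"
    by (intro sum.cong refl) (auto simp: F_def prod.lessThan_Suc_shift simp del: prod.lessThan_Suc)
  also have "\<dots> = (\<Sum>e\<in>{-1,1::int}. \<Sum>es\<in>signs ?n. of_int e * f w e * ?S es)"
    by (rule sum.cartesian_product[symmetric])
  also have "\<dots> = (f w 1 - f w (-1)) * (\<Sum>es\<in>signs ?n. ?S es)"
    by (simp add: sum_distrib_left left_diff_distrib sum_subtractf mult.assoc sum_negf)
  finally show ?case using Cons by simp
qed

lemma Xcoeff_eq: "Xcoeff ws j N = (\<Sum>x\<in>Xs N j. \<Prod>w\<leftarrow>ws. Dval w x)"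
proof -
  have "(\<Prod>w\<leftarrow>ws. Dval w x) =
    (\<Sum>es\<in>signs (length ws). of_int (prod_list es) * (\<Prod>i<length ws. Aval ((ws!i) powi (es!i)) x))" for x
    using expand[of "\<lambda>w e. Aval (w powi e) x" ws] by (simp add: Dval_def)
  then have "(\<Sum>x\<in>Xs N j. \<Prod>w\<leftarrow>ws. Dval w x) =
    (\<Sum>x\<in>Xs N j. \<Sum>es\<in>signs (length ws). of_int (prod_list es) * (\<Prod>i<length ws. Aval ((ws!i) powi (es!i)) x))"
    by simp
  also have "\<dots> = (\<Sum>es\<in>signs (length ws). \<Sum>x\<in>Xs N j. of_int (prod_list es) * (\<Prod>i<length ws. Aval ((ws!i) powi (es!i)) x))"
    by (rule sum.swap)
  also have "\<dots> = Xcoeff ws j N"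
    unfolding Xcoeff_def Xs_def by (simp add: sum_distrib_left)
  finally show ?thesis by simp
qed

theorem proposition4p2:
  fixes m :: nat and ws :: "complex list"
  assumes "\<forall>w\<in>set ws. w \<noteq> 0 \<and> w\<^sup>2 \<noteq> 1"
  shows "frakD m ws = (\<lambda>N2. Xcoeff ws (int m) N2 - Xcoeff ws (int m + 2) N2)"
proof
  fix N2
  have cm: "(\<Prod>w\<leftarrow>ws. Dval w (M - {#k#}, add_mset k P)) = (\<Prod>w\<leftarrow>ws. Dval w (M,P))"
    if "k \<in># M" for M P k
    using Dval_move[OF that] by simp
  show "frakD m ws N2 = Xcoeff ws (int m) N2 - Xcoeff ws (int m + 2) N2"
    unfolding frakD_def Xcoeff_eq
    by (rule trace_main[where c = "\<lambda>x. \<Prod>w\<leftarrow>ws. Dval w x"]) (use cm in auto)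
qed

end
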